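(* Let $C$ be a linear $[n,k,d]_q$ code with covering radius $\rho$, and let $C'=\{(a,x_1,\dots,x_n): a\in\mathbb{F}_q,\ (x_1,\dots,x_n)\in C\}\subseteq\mathbb{F}_q^{n+1}$ be its $q$-repeated code. Then $C'$ has covering radius $\rho'=\rho$ and minimum distance $d'=1$. Moreover, $C'$ is completely regular if and only if $C$ is completely regular.
   Context: $\mathbb{F}_q$ is the finite field with $q$ elements. Hamming weight $\mathrm{wt}$ and distance $d({\bf x},{\bf y})=\mathrm{wt}({\bf x}-{\bf y})$; $d({\bf v},C)=\min_{{\bf x}\in C}d({\bf v},{\bf x})$; covering radius $\rho=\max_{{\bf v}}d({\bf v},C)$. A code $C$ is completely regular if for every vector ${\bf x}$, with $t=d({\bf x},C)$, the number of codewords at distance $i$ from ${\bf x}$ depends only on $t$ and $i$. *)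

theory Defs
  imports Main
begin

definition vecs :: "nat \<Rightarrow> 'a list set" where
  "vecs n = {x. length x = n}"

definition hwt :: "'a::zero list \<Rightarrow> nat" where
  "hwt x = length (filter (\<lambda>c. c \<noteq> 0) x)"

definition hdist :: "'a::ab_group_add list \<Rightarrow> 'a list \<Rightarrow> nat" where
  "hdist x y = hwt (map2 (-) x y)"

definition dist_code :: "'a::ab_group_add list \<Rightarrow> 'a list set \<Rightarrow> nat" where
  "dist_code v C = Min ((\<lambda>x. hdist v x) ` C)"

definition covering_radius :: "nat \<Rightarrow> 'a::ab_group_add list set \<Rightarrow> nat" where
  "covering_radius n C = Max ((\<lambda>v. dist_code v C) ` vecs n)"

definition min_distance :: "'a::ab_group_add list set \<Rightarrow> nat" where
  "min_distance C = Min {hdist x y | x y. x \<in> C \<and> y \<in> C \<and> x \<noteq> y}"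

definition linear_code :: "nat \<Rightarrow> 'a::field list set \<Rightarrow> bool" where
  "linear_code n C \<longleftrightarrow> C \<subseteq> vecs n \<and> replicate n 0 \<in> C \<and>
     (\<forall>x\<in>C. \<forall>y\<in>C. map2 (+) x y \<in> C) \<and>
     (\<forall>a. \<forall>x\<in>C. map (\<lambda>c. a * c) x \<in> C)"

definition completely_regular :: "nat \<Rightarrow> 'a::ab_group_add list set \<Rightarrow> bool" where
  "completely_regular n C \<longleftrightarrow>
     (\<forall>x\<in>vecs n. \<forall>y\<in>vecs n. dist_code x C = dist_code y C \<longrightarrow>
        (\<forall>i. card {c\<in>C. hdist x c = i} = card {c\<in>C. hdist y c = i}))"

definition repeated_code :: "'a list set \<Rightarrow> 'a list set" where
  "repeated_code C = {a # x | a x. x \<in> C}"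

end

theory Submission
  imports Defs
begin

lemma hdist_Cons: "hdist (b#v) (a#x) = (if b = a then 0 else 1) + hdist v (x::'a::ab_group_add list)"
  by (simp add: hdist_def hwt_def)

lemma hdist_0: "length x = length y \<Longrightarrow> hdist x y = 0 \<Longrightarrow> x = (y::'a::ab_group_add list)"
proof (induction x arbitrary: y)
  case Nil then show ?case by simp
next
  case (Cons a x)
  then obtain b z where y: "y = b # z" by (cases y) auto
  with Cons show ?case by (auto simp: hdist_Cons split: if_splits)
qed

lemma finite_vecs: "finite (vecs n :: 'a::finite list set)"
proof -
  have "vecs n = {xs::'a list. set xs \<subseteq> UNIV \<and> length xs = n}" by (auto simp: vecs_def)
  then show ?thesis using finite_lists_length_eq[of "UNIV::'a set" n] by simp
qed

lemma vecs_Suc: "vecs (Suc n) = {b#v | b v. v \<in> vecs n}"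
  by (auto simp: vecs_def length_Suc_conv)

lemma rep_image: "repeated_code C = (\<lambda>(a,x). a#x) ` (UNIV \<times> C)"
  by (auto simp: repeated_code_def)

lemma finite_rep: "finite (C :: 'a::finite list set) \<Longrightarrow> finite (repeated_code C)"
  by (simp add: rep_image)

lemma dist_code_rep:
  fixes C :: "'a::{finite,ab_group_add} list set"
  assumes fin: "finite C" and ne: "C \<noteq> {}"
  shows "dist_code (b#v) (repeated_code C) = dist_code v C"
proof (rule antisym)
  have fin': "finite (repeated_code C)" using fin by (rule finite_rep)
  have "dist_code v C \<in> (\<lambda>x. hdist v x) ` C" unfolding dist_code_def using fin ne by (intro Min_in) auto
  then obtain x where x: "x \<in> C" "dist_code v C = hdist v x" by auto
  have "b # x \<in> repeated_code C" using x by (auto simp: repeated_code_def)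
  then have "dist_code (b#v) (repeated_code C) \<le> hdist (b#v) (b#x)"
    unfolding dist_code_def using fin' by (intro Min_le) auto
  then show "dist_code (b#v) (repeated_code C) \<le> dist_code v C" using x by (simp add: hdist_Cons)
next
  have fin': "finite (repeated_code C)" using fin by (rule finite_rep)
  have ne': "repeated_code C \<noteq> {}" using ne by (auto simp: repeated_code_def)
  show "dist_code v C \<le> dist_code (b#v) (repeated_code C)"
    unfolding dist_code_def
  proof (rule Min.boundedI)
    show "finite ((\<lambda>x. hdist (b # v) x) ` repeated_code C)" using fin' by simp
    show "(\<lambda>x. hdist (b # v) x) ` repeated_code C \<noteq> {}" using ne' by simp
    fix m assume "m \<in> (\<lambda>x. hdist (b # v) x) ` repeated_code C"
    then obtain a x where ax: "x \<in> C" "m = hdist (b#v) (a#x)" by (auto simp: repeated_code_def)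
    have "Min ((\<lambda>x. hdist v x) ` C) \<le> hdist v x" using fin ax by (intro Min_le) auto
    then show "Min ((\<lambda>x. hdist v x) ` C) \<le> m" using ax by (simp add: hdist_Cons)
  qed
qed

lemma card_rep:
  fixes C :: "'a::{finite,ab_group_add} list set"
  assumes fin: "finite C"
  shows "card {c\<in>repeated_code C. hdist (b#v) c = i} =
    card {x\<in>C. hdist v x = i} + (card (UNIV::'a set) - 1) * card {x\<in>C. Suc (hdist v x) = i}"
proof -
  let ?A = "{x\<in>C. hdist v x = i}" and ?B = "{x\<in>C. Suc (hdist v x) = i}"
  have eq: "{c\<in>repeated_code C. hdist (b#v) c = i} =
      (Cons b) ` ?A \<union> (\<lambda>(a,x). a#x) ` ((- {b}) \<times> ?B)"
    by (auto simp: repeated_code_def hdist_Cons split: if_splits)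
  have d: "(Cons b) ` ?A \<inter> (\<lambda>(a,x). a#x) ` ((- {b}) \<times> ?B) = {}" by auto
  have c1: "card ((Cons b) ` ?A) = card ?A" by (simp add: card_image)
  have inj: "inj_on (\<lambda>(a,x). a#x) ((- {b}) \<times> ?B)" by (auto simp: inj_on_def)
  have c2: "card ((\<lambda>(a,x). a#x) ` ((- {b}) \<times> ?B)) = (card (UNIV::'a set) - 1) * card ?B"
    using card_image[OF inj] by (simp add: card_cartesian_product Compl_eq_Diff_UNIV card_Diff_singleton)
  show ?thesis unfolding eq
    using fin by (subst card_Un_disjoint) (auto simp: c1 c2 d)
qed

theorem theorem2p3:
  fixes C :: "'a::{finite,field} list set" and n k d \<rho> :: nat
  assumes lin: "linear_code n C"
    and dimk: "card C = card (UNIV :: 'a set) ^ k"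
    and k_pos: "k \<ge> 1"
    and distd: "min_distance C = d"
    and rho: "covering_radius n C = \<rho>"
  shows "covering_radius (Suc n) (repeated_code C) = \<rho>
       \<and> min_distance (repeated_code C) = 1
       \<and> (completely_regular (Suc n) (repeated_code C) \<longleftrightarrow> completely_regular n C)"
proof -
  have sub: "C \<subseteq> vecs n" and z: "replicate n 0 \<in> C" using lin by (auto simp: linear_code_def)
  have fin: "finite C" using sub finite_vecs finite_subset by blast
  have ne: "C \<noteq> {}" using z by auto
  let ?C' = "repeated_code C"
  have cov: "covering_radius (Suc n) ?C' = \<rho>"
  proof -
    have "(\<lambda>v. dist_code v ?C') ` vecs (Suc n) = (\<lambda>v. dist_code v C) ` vecs n"
    proof
      show "(\<lambda>v. dist_code v ?C') ` vecs (Suc n) \<subseteq> (\<lambda>v. dist_code v C) ` vecs n"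
        by (auto simp: vecs_Suc dist_code_rep[OF fin ne])
      show "(\<lambda>v. dist_code v C) ` vecs n \<subseteq> (\<lambda>v. dist_code v ?C') ` vecs (Suc n)"
      proof
        fix m assume "m \<in> (\<lambda>v. dist_code v C) ` vecs n"
        then obtain v where v: "v \<in> vecs n" "m = dist_code v C" by auto
        then have "0#v \<in> vecs (Suc n)" "m = dist_code (0#v) ?C'"
          by (auto simp: vecs_Suc dist_code_rep[OF fin ne])
        then show "m \<in> (\<lambda>v. dist_code v ?C') ` vecs (Suc n)" by blast
      qed
    qed
    then show ?thesis using rho by (simp add: covering_radius_def)
  qed
  have md: "min_distance ?C' = 1"
  proof -
    let ?S = "{hdist x y | x y. x \<in> ?C' \<and> y \<in> ?C' \<and> x \<noteq> y}"
    have "?S \<subseteq> (\<lambda>(x,y). hdist x y) ` (?C' \<times> ?C')" by auto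
    then have finS: "finite ?S" using finite_rep[OF fin] by (meson finite_SigmaI finite_imageI finite_subset)
    have "0 # replicate n 0 \<in> ?C'" "1 # replicate n 0 \<in> ?C'" using z by (auto simp: repeated_code_def)
    moreover have "hdist (0 # replicate n 0) (1 # replicate n (0::'a)) = 1"
      by (simp add: hdist_Cons hdist_def hwt_def)
    ultimately have in1: "1 \<in> ?S" by force
    have ge: "\<forall>m\<in>?S. 1 \<le> m"
    proof
      fix m assume "m \<in> ?S"
      then obtain x y where xy: "x \<in> ?C'" "y \<in> ?C'" "x \<noteq> y" "m = hdist x y" by blast
      have "length x = length y" using xy(1,2) sub by (auto simp: repeated_code_def vecs_def subset_iff)
      then show "1 \<le> m" using xy hdist_0 by (metis less_one not_less)
    qed
    show ?thesis unfolding min_distance_def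
      using finS in1 ge by (meson Min_eqI)
  qed
  have cr: "completely_regular (Suc n) ?C' \<longleftrightarrow> completely_regular n C"
  proof
    assume cr': "completely_regular (Suc n) ?C'"
    show "completely_regular n C" unfolding completely_regular_def
    proof (intro ballI impI allI)
      fix v w i assume v: "v \<in> vecs n" and w: "w \<in> vecs n" and eq: "dist_code v C = dist_code w C"
      have "0#v \<in> vecs (Suc n)" "0#w \<in> vecs (Suc n)" using v w by (auto simp: vecs_Suc)
      moreover have "dist_code (0#v) ?C' = dist_code (0#w) ?C'"
        using eq by (simp add: dist_code_rep[OF fin ne])
      ultimately have M: "\<And>j. card {c\<in>?C'. hdist (0#v) c = j} = card {c\<in>?C'. hdist (0#w) c = j}"
        using cr' unfolding completely_regular_def by blast
      show "card {c\<in>C. hdist v c = i} = card {c\<in>C. hdist w c = i}"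
      proof (induction i)
        case 0
        have "{x\<in>C. Suc (hdist v x) = 0} = {}" "{x\<in>C. Suc (hdist w x) = 0} = {}" by auto
        then show ?case using M[of 0] by (simp add: card_rep[OF fin])
      next
        case (Suc j)
        have a: "{x\<in>C. Suc (hdist v x) = Suc j} = {x\<in>C. hdist v x = j}"
          "{x\<in>C. Suc (hdist w x) = Suc j} = {x\<in>C. hdist w x = j}" by auto
        show ?case using M[of "Suc j"] Suc.IH by (simp add: card_rep[OF fin] a)
      qed
    qed
  next
    assume crC: "completely_regular n C"
    show "completely_regular (Suc n) ?C'" unfolding completely_regular_def
    proof (intro ballI impI allI)
      fix v' w' i assume v': "v' \<in> vecs (Suc n)" and w': "w' \<in> vecs (Suc n)"
        and eq: "dist_code v' ?C' = dist_code w' ?C'"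
      obtain b v where bv: "v' = b#v" "v \<in> vecs n" using v' by (auto simp: vecs_Suc)
      obtain c w where cw: "w' = c#w" "w \<in> vecs n" using w' by (auto simp: vecs_Suc)
      have "dist_code v C = dist_code w C" using eq bv cw by (simp add: dist_code_rep[OF fin ne])
      then have N: "\<And>j. card {x\<in>C. hdist v x = j} = card {x\<in>C. hdist w x = j}"
        using crC bv cw unfolding completely_regular_def by blast
      have N2: "card {x\<in>C. Suc (hdist v x) = i} = card {x\<in>C. Suc (hdist w x) = i}"
      proof (cases i)
        case 0 then show ?thesis by simp
      next
        case (Suc j)
        have "{x\<in>C. Suc (hdist v x) = i} = {x\<in>C. hdist v x = j}"
          "{x\<in>C. Suc (hdist w x) = i} = {x\<in>C. hdist w x = j}" using Suc by auto
        then show ?thesis using N by simp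
      qed
      show "card {c\<in>?C'. hdist v' c = i} = card {c\<in>?C'. hdist w' c = i}"
        using bv cw N N2 by (simp add: card_rep[OF fin])
    qed
  qed
  show ?thesis using cov md cr by blast
qed

end
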